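(* Let $k\ge 2$, $X_1,\dots,X_k\in\mathcal{M}_d$ and $S\subseteq\{1,\dots,k\}$. For $i\in\{1,\dots,k\}$ put $X_i'=X_i^T$ if $i\in S$ and $X_i'=X_i$ if $i\notin S$, and put $Y_i=X_i$ if $i\in S$ and $Y_i=X_i^T$ if $i\notin S$. Then $$\operatorname{tr}_{\{1,\dots,k\}\setminus\{k\}}\big[(k\,k\!-\!1\cdots1)^{T_S}(X_1\otimes\cdots\otimes X_k)\big]=\begin{cases}X_1'X_2'\cdots X_{k-1}'X_k & k\notin S,\\ Y_{k-1}Y_{k-2}\cdots Y_1X_k & k\in S.\end{cases}$$
   Context: $\mathcal{M}_d$ denotes complex $d\times d$ matrices. A permutation $\sigma\in S_k$ acts on $(\mathbb{C}^d)^{\otimes k}$ by $\sigma|v_1\rangle\otimes\cdots\otimes|v_k\rangle=|v_{\sigma^{-1}(1)}\rangle\otimes\cdots\otimes|v_{\sigma^{-1}(k)}\rangle$, extended linearly; $(k\,k\!-\!1\cdots1)$ is the cycle $k\to k-1\to\cdots\to1\to k$. $T_S$ is the partial transpose (with respect to a fixed orthonormal basis) on all tensor factors in $S$, and $X^T$ is the transpose in that basis. $\operatorname{tr}_{\{1,\dots,k\}\setminus\{k\}}$ is the partial trace over all tensor factors except the $k$-th. *)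

theory Defs
  imports "Jordan_Normal_Form.Matrix"
begin

text \<open>Operators on the k-fold tensor power of C^d, with tensor factors numbered 1..k,
  are represented by their matrix entries with respect to the product basis.
  Basis vectors of the tensor power are indexed by multi-indices, i.e. extensional
  functions from {1..k} to {0..<d}.\<close>

type_synonym tensor_op = "(nat \<Rightarrow> nat) \<Rightarrow> (nat \<Rightarrow> nat) \<Rightarrow> complex"

definition multi_idx :: "nat \<Rightarrow> nat set \<Rightarrow> (nat \<Rightarrow> nat) set" where
  "multi_idx d I = PiE I (\<lambda>_. {..<d})"

definition tensor_mats :: "nat \<Rightarrow> (nat \<Rightarrow> complex mat) \<Rightarrow> tensor_op" where
  "tensor_mats k X i j = (\<Prod>a\<in>{1..k}. X a $$ (i a, j a))"

text \<open>Permutation operator: sigma maps the basis vector e_j to e_(j o inv sigma),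
  i.e. slot a receives the vector from slot inv sigma a.\<close>
definition perm_op :: "nat \<Rightarrow> (nat \<Rightarrow> nat) \<Rightarrow> tensor_op" where
  "perm_op k sg i j = (if i = restrict (\<lambda>a. j (Hilbert_Choice.inv sg a)) {1..k} then 1 else 0)"

definition down_cycle :: "nat \<Rightarrow> nat \<Rightarrow> nat" where
  "down_cycle k a = (if a = 1 then k else if 2 \<le> a \<and> a \<le> k then a - 1 else a)"

definition op_mult :: "nat \<Rightarrow> nat \<Rightarrow> tensor_op \<Rightarrow> tensor_op \<Rightarrow> tensor_op" where
  "op_mult d k A B i j = (\<Sum>m\<in>multi_idx d {1..k}. A i m * B m j)"

definition partial_transpose :: "nat set \<Rightarrow> tensor_op \<Rightarrow> tensor_op" where
  "partial_transpose S A i j =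
     A (\<lambda>a. if a \<in> S then j a else i a) (\<lambda>a. if a \<in> S then i a else j a)"

definition ptrace_keep_last :: "nat \<Rightarrow> nat \<Rightarrow> tensor_op \<Rightarrow> complex mat" where
  "ptrace_keep_last d k A = mat d d (\<lambda>(p, q).
     \<Sum>m\<in>multi_idx d ({1..k} - {k}). A (m(k := p)) (m(k := q)))"

end

theory Submission
  imports Defs
begin


lemma sum_PiE_insert:
  assumes "x \<notin> S" "finite S" "finite (T x)" "\<And>i. i\<in>S \<Longrightarrow> finite (T i)"
  shows "(\<Sum>g\<in>PiE (insert x S) T. f g) = (\<Sum>y\<in>T x. \<Sum>g\<in>PiE S T. f (g(x:=y)))"
proof -
  have inj: "inj_on (\<lambda>(y, g). g(x := y)) (T x \<times> PiE S T)"
  proof (rule inj_onI, clarsimp)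
    fix y g y' g'
    assume "y \<in> T x" "g \<in> PiE S T" "y' \<in> T x" "g' \<in> PiE S T" "g(x := y) = g'(x := y')"
    then show "y = y' \<and> g = g'" using assms(1)
      by (metis PiE_E fun_upd_eqD fun_upd_same fun_upd_triv fun_upd_upd)
  qed
  have "(\<Sum>g\<in>PiE (insert x S) T. f g) = (\<Sum>(y,g)\<in>T x \<times> PiE S T. f (g(x:=y)))"
    unfolding PiE_insert_eq by (subst sum.reindex[OF inj]) (simp add: case_prod_unfold)
  also have "\<dots> = (\<Sum>y\<in>T x. \<Sum>g\<in>PiE S T. f (g(x:=y)))"
    by (rule sum.cartesian_product[symmetric])
  finally show ?thesis .
qed

lemma foldr_carrier:
  assumes "\<forall>i\<in>set xs. B i \<in> carrier_mat d d" "C \<in> carrier_mat d d"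
  shows "foldr (\<lambda>i acc. B i * acc) xs C \<in> carrier_mat d d"
  using assms by (induction xs) auto

lemma chain:
  assumes "\<forall>i\<in>set xs. B i \<in> carrier_mat d d" "C \<in> carrier_mat d d" "p < d" "q < d"
  shows "foldr (\<lambda>i acc. B i * acc) xs C $$ (p,q) =
    (\<Sum>t\<in>PiE {..<length xs} (\<lambda>_. {..<d}).
       (\<Prod>j<length xs. B (xs!j) $$ (if j = 0 then p else t (j-1), t j)) *
       C $$ (if xs = [] then p else t (length xs - 1), q))"
  using assms(1,2)
proof (induction xs arbitrary: C rule: rev_induct)
  case Nil
  then show ?case by simp
next
  case (snoc x xs)
  define n where "n = length xs"
  have Bx: "B x \<in> carrier_mat d d" using snoc by simp
  have IH: "foldr (\<lambda>i acc. B i * acc) xs (B x * C) $$ (p,q) =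
    (\<Sum>t\<in>PiE {..<n} (\<lambda>_. {..<d}).
       (\<Prod>j<n. B (xs!j) $$ (if j = 0 then p else t (j-1), t j)) *
       (B x * C) $$ (if xs = [] then p else t (n - 1), q))"
    unfolding n_def using snoc by (intro snoc.IH) auto
  have lhs: "foldr (\<lambda>i acc. B i * acc) (xs @ [x]) C = foldr (\<lambda>i acc. B i * acc) xs (B x * C)"
    by simp
  have r: "(if xs = [] then p else t (n - 1)) < d" if "t \<in> PiE {..<n} (\<lambda>_. {..<d})" for t
    using that assms(3) n_def by (cases xs) auto
  have "(\<Sum>t\<in>PiE {..<length (xs@[x])} (\<lambda>_. {..<d}).
       (\<Prod>j<length (xs@[x]). B ((xs@[x])!j) $$ (if j = 0 then p else t (j-1), t j)) *
       C $$ (if xs@[x] = [] then p else t (length (xs@[x]) - 1), q))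
     = (\<Sum>t\<in>PiE (insert n {..<n}) (\<lambda>_. {..<d}).
       (\<Prod>j<Suc n. B ((xs@[x])!j) $$ (if j = 0 then p else t (j-1), t j)) *
       C $$ (t n, q))"
    by (simp add: n_def lessThan_Suc)
  also have "\<dots> = (\<Sum>y<d. \<Sum>t\<in>PiE {..<n} (\<lambda>_. {..<d}).
       (\<Prod>j<Suc n. B ((xs@[x])!j) $$ (if j = 0 then p else (t(n:=y)) (j-1), (t(n:=y)) j)) *
       C $$ (y, q))"
    by (subst sum_PiE_insert) auto
  also have "\<dots> = (\<Sum>y<d. \<Sum>t\<in>PiE {..<n} (\<lambda>_. {..<d}).
       (\<Prod>j<n. B (xs!j) $$ (if j = 0 then p else t (j-1), t j)) *
       B x $$ (if xs = [] then p else t (n - 1), y) * C $$ (y, q))"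
  proof (intro sum.cong refl)
    fix y t
    have "(\<Prod>j<Suc n. B ((xs@[x])!j) $$ (if j = 0 then p else (t(n:=y)) (j-1), (t(n:=y)) j))
      = (\<Prod>j<n. B ((xs@[x])!j) $$ (if j = 0 then p else (t(n:=y)) (j-1), (t(n:=y)) j)) *
        B x $$ (if xs = [] then p else t (n - 1), y)"
      by (simp add: n_def) (cases xs; simp)
    also have "(\<Prod>j<n. B ((xs@[x])!j) $$ (if j = 0 then p else (t(n:=y)) (j-1), (t(n:=y)) j))
       = (\<Prod>j<n. B (xs!j) $$ (if j = 0 then p else t (j-1), t j))"
      by (intro prod.cong refl) (auto simp: n_def nth_append)
    finally show "(\<Prod>j<Suc n. B ((xs@[x])!j) $$ (if j = 0 then p else (t(n:=y)) (j-1), (t(n:=y)) j)) *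
       C $$ (y, q) = (\<Prod>j<n. B (xs!j) $$ (if j = 0 then p else t (j-1), t j)) *
       B x $$ (if xs = [] then p else t (n - 1), y) * C $$ (y, q)" by simp
  qed
  also have "\<dots> = (\<Sum>t\<in>PiE {..<n} (\<lambda>_. {..<d}). \<Sum>y<d.
       (\<Prod>j<n. B (xs!j) $$ (if j = 0 then p else t (j-1), t j)) *
       B x $$ (if xs = [] then p else t (n - 1), y) * C $$ (y, q))"
    by (rule sum.swap)
  also have "\<dots> = (\<Sum>t\<in>PiE {..<n} (\<lambda>_. {..<d}).
       (\<Prod>j<n. B (xs!j) $$ (if j = 0 then p else t (j-1), t j)) *
       (B x * C) $$ (if xs = [] then p else t (n - 1), q))"
  proof (intro sum.cong refl)
    fix t assume t: "t \<in> PiE {..<n} (\<lambda>_. {..<d})"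
    have "(B x * C) $$ (if xs = [] then p else t (n - 1), q) =
       (\<Sum>y<d. B x $$ (if xs = [] then p else t (n - 1), y) * C $$ (y, q))"
      using Bx snoc.prems(2) r[OF t] assms(4)
      by (simp add: scalar_prod_def lessThan_atLeast0 row_def col_def)
    then show "(\<Sum>y<d. (\<Prod>j<n. B (xs!j) $$ (if j = 0 then p else t (j-1), t j)) *
       B x $$ (if xs = [] then p else t (n - 1), y) * C $$ (y, q)) =
       (\<Prod>j<n. B (xs!j) $$ (if j = 0 then p else t (j-1), t j)) *
       (B x * C) $$ (if xs = [] then p else t (n - 1), q)"
      by (simp add: sum_distrib_left mult.assoc)
  qed
  finally show ?case using IH lhs by simp
qed



lemma dc_inj: "k \<ge> 2 \<Longrightarrow> inj (down_cycle k)"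
  unfolding down_cycle_def by (rule injI) (auto split: if_splits)

lemma inv_dc:
  assumes "k \<ge> 2" "a \<in> {1..k}"
  shows "Hilbert_Choice.inv (down_cycle k) a = (if a = k then 1 else a + 1)"
proof -
  have "down_cycle k (if a = k then 1 else a + 1) = a"
    using assms unfolding down_cycle_def by auto
  then show ?thesis using inv_f_f[OF dc_inj[OF assms(1)]] by metis
qed

lemma PT_cond:
  assumes "k \<ge> 2" "S \<subseteq> {1..k}" "i \<in> extensional {1..k}"
  shows "partial_transpose S (perm_op k (down_cycle k)) i n =
    (if (\<forall>a\<in>{1..k}. (if a \<in> S then n a else i a) =
        (let b = (if a = k then 1 else a + 1) in if b \<in> S then i b else n b)) then 1 else 0)"
proof -
  have "((\<lambda>a. if a \<in> S then n a else i a) =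
        restrict (\<lambda>a. (\<lambda>a. if a \<in> S then i a else n a) (Hilbert_Choice.inv (down_cycle k) a)) {1..k})
     = (\<forall>a\<in>{1..k}. (if a \<in> S then n a else i a) =
        (let b = (if a = k then 1 else a + 1) in if b \<in> S then i b else n b))"
  proof
    assume h: "(\<lambda>a. if a \<in> S then n a else i a) =
        restrict (\<lambda>a. (\<lambda>a. if a \<in> S then i a else n a) (Hilbert_Choice.inv (down_cycle k) a)) {1..k}"
    show "\<forall>a\<in>{1..k}. (if a \<in> S then n a else i a) =
        (let b = (if a = k then 1 else a + 1) in if b \<in> S then i b else n b)"
    proof
      fix a assume a: "a \<in> {1..k}"
      from fun_cong[OF h, of a] a inv_dc[OF assms(1) a] show "(if a \<in> S then n a else i a) =
        (let b = (if a = k then 1 else a + 1) in if b \<in> S then i b else n b)"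
        by (simp add: Let_def)
    qed
  next
    assume h: "\<forall>a\<in>{1..k}. (if a \<in> S then n a else i a) =
        (let b = (if a = k then 1 else a + 1) in if b \<in> S then i b else n b)"
    show "(\<lambda>a. if a \<in> S then n a else i a) =
        restrict (\<lambda>a. (\<lambda>a. if a \<in> S then i a else n a) (Hilbert_Choice.inv (down_cycle k) a)) {1..k}"
    proof
      fix a
      show "(if a \<in> S then n a else i a) =
        restrict (\<lambda>a. (\<lambda>a. if a \<in> S then i a else n a) (Hilbert_Choice.inv (down_cycle k) a)) {1..k} a"
      proof (cases "a \<in> {1..k}")
        case True
        then show ?thesis using h inv_dc[OF assms(1) True] by (simp add: Let_def)
      next
        case False
        then show ?thesis using assms(2,3) by (auto simp: extensional_def)
      qed
    qed
  qed
  then show ?thesis unfolding partial_transpose_def perm_op_def by simp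
qed

definition Ent :: "nat set \<Rightarrow> (nat \<Rightarrow> complex mat) \<Rightarrow> nat \<Rightarrow> nat \<Rightarrow> nat \<Rightarrow> complex" where
  "Ent S X a r s = (if a \<in> S then X a $$ (s, r) else X a $$ (r, s))"

definition cnd where
  "cnd k S p m n = (\<forall>a\<in>{1..k}. (if a \<in> S then n a else (m(k:=p)) a) =
        (let b = (if a = k then 1 else a + 1) in if b \<in> S then (m(k:=p)) b else n b))"

lemma entry:
  assumes "k \<ge> 2" "S \<subseteq> {1..k}" "p < d" "q < d"
  shows "ptrace_keep_last d k (op_mult d k (partial_transpose S (perm_op k (down_cycle k))) (tensor_mats k X)) $$ (p,q)
    = (\<Sum>(m,n)\<in>multi_idx d ({1..k}-{k}) \<times> multi_idx d {1..k}.
         if cnd k S p m n then (\<Prod>a\<in>{1..k}. X a $$ (n a, (m(k:=q)) a)) else 0)"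
proof -
  have "ptrace_keep_last d k (op_mult d k (partial_transpose S (perm_op k (down_cycle k))) (tensor_mats k X)) $$ (p,q)
    = (\<Sum>m\<in>multi_idx d ({1..k}-{k}). \<Sum>n\<in>multi_idx d {1..k}.
         partial_transpose S (perm_op k (down_cycle k)) (m(k:=p)) n * (\<Prod>a\<in>{1..k}. X a $$ (n a, (m(k:=q)) a)))"
    using assms unfolding ptrace_keep_last_def op_mult_def tensor_mats_def by simp
  also have "\<dots> = (\<Sum>m\<in>multi_idx d ({1..k}-{k}). \<Sum>n\<in>multi_idx d {1..k}.
         if cnd k S p m n then (\<Prod>a\<in>{1..k}. X a $$ (n a, (m(k:=q)) a)) else 0)"
  proof (intro sum.cong refl)
    fix m n assume m: "m \<in> multi_idx d ({1..k}-{k})"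
    have "m(k:=p) \<in> extensional {1..k}"
      using m assms(1) unfolding multi_idx_def by (auto simp: extensional_def PiE_def)
    then show "partial_transpose S (perm_op k (down_cycle k)) (m(k:=p)) n * (\<Prod>a\<in>{1..k}. X a $$ (n a, (m(k:=q)) a)) =
         (if cnd k S p m n then (\<Prod>a\<in>{1..k}. X a $$ (n a, (m(k:=q)) a)) else 0)"
      using PT_cond[OF assms(1,2)] unfolding cnd_def by simp
  qed
  also note sum.cartesian_product
  finally show ?thesis .
qed

lemma collapse:
  assumes "finite A" "inj_on \<phi> T" "\<phi> ` T = {x\<in>A. P x}"
  shows "(\<Sum>x\<in>A. if P x then G x else 0) = (\<Sum>t\<in>T. G (\<phi> t))"
proof -
  have "(\<Sum>x\<in>A. if P x then G x else 0) = (\<Sum>x\<in>{x\<in>A. P x}. G x)"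
    using assms(1) by (simp add: sum.inter_filter)
  also have "\<dots> = (\<Sum>t\<in>T. G (\<phi> t))"
    unfolding assms(3)[symmetric] by (rule sum.reindex[OF assms(2), unfolded comp_def])
  finally show ?thesis .
qed

lemma prod_phi:
  assumes "k \<ge> 2"
  shows "(\<Prod>a\<in>{1..k}. X a $$ ((restrict (\<lambda>a. if a = k then w else if a \<in> S then v a else u a) {1..k}) a,
            ((restrict (\<lambda>a. if a \<in> S then u a else v a) ({1..k}-{k}))(k:=q)) a))
       = (\<Prod>a\<in>{1..k-1}. Ent S X a (u a) (v a)) * X k $$ (w, q)"
proof -
  have "(\<Prod>a\<in>{1..k}. X a $$ ((restrict (\<lambda>a. if a = k then w else if a \<in> S then v a else u a) {1..k}) a,
            ((restrict (\<lambda>a. if a \<in> S then u a else v a) ({1..k}-{k}))(k:=q)) a))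
     = (\<Prod>a\<in>{1..k}. if a = k then X k $$ (w, q) else Ent S X a (u a) (v a))"
    by (intro prod.cong refl) (auto simp: Ent_def)
  also have "(\<Prod>a\<in>{1..k}. if a = k then X k $$ (w, q) else Ent S X a (u a) (v a))
     = X k $$ (w, q) * (\<Prod>a\<in>{1..k-1}. if a = k then X k $$ (w, q) else Ent S X a (u a) (v a))"
  proof -
    have e: "{1..k} = insert k {1..k-1}" using assms by auto
    show ?thesis using assms by (simp only: e) (subst prod.insert, auto)
  qed
  also have "(\<Prod>a\<in>{1..k-1}. if a = k then X k $$ (w, q) else Ent S X a (u a) (v a))
     = (\<Prod>a\<in>{1..k-1}. Ent S X a (u a) (v a))"
    using assms by (intro prod.cong refl) auto
  finally show ?thesis by (simp only: mult.commute)
qed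



lemma case_notin:
  assumes k2: "k \<ge> 2" and S: "S \<subseteq> {1..k}" and kS: "k \<notin> S" and p: "p < d"
  shows "(\<Sum>(m,n)\<in>multi_idx d ({1..k}-{k}) \<times> multi_idx d {1..k}.
         if cnd k S p m n then (\<Prod>a\<in>{1..k}. X a $$ (n a, (m(k:=q)) a)) else 0)
   = (\<Sum>t\<in>PiE {..<k-1} (\<lambda>_. {..<d}).
       (\<Prod>j<k-1. Ent S X (j+1) (if j = 0 then p else t (j-1)) (t j)) * X k $$ (t (k-2), q))"
proof -
  define T where "T = PiE {..<k-1} (\<lambda>_. {..<d})"
  define M where "M = multi_idx d ({1..k}-{k})"
  define N where "N = multi_idx d {1..k}"
  define u where "u t a = (if a = 1 then p else t (a-2))" for t :: "nat \<Rightarrow> nat" and a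
  define v where "v t a = t (a-1)" for t :: "nat \<Rightarrow> nat" and a
  define \<phi> where "\<phi> t = (restrict (\<lambda>a. if a \<in> S then u t a else v t a) ({1..k}-{k}),
      restrict (\<lambda>a. if a = k then t (k-2) else if a \<in> S then v t a else u t a) {1..k})" for t
  have inj: "inj_on \<phi> T"
  proof (rule inj_onI)
    fix t t' assume t: "t \<in> T" and t': "t' \<in> T" and e: "\<phi> t = \<phi> t'"
    show "t = t'"
    proof (rule PiE_ext[OF t[unfolded T_def] t'[unfolded T_def]])
      fix j assume j: "j \<in> {..<k-1}"
      have e1: "fst (\<phi> t) (Suc j) = fst (\<phi> t') (Suc j)" and e2: "snd (\<phi> t) (Suc j) = snd (\<phi> t') (Suc j)"
        using e by auto
      have j1: "Suc j \<le> k" "Suc j \<noteq> k" "1 \<le> Suc j" using j by auto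
      show "t j = t' j"
      proof (cases "Suc j \<in> S")
        case True
        then show ?thesis using e2 j1 by (simp add: \<phi>_def v_def)
      next
        case False
        then show ?thesis using e1 j1 by (simp add: \<phi>_def v_def)
      qed
    qed
  qed
  have memT: "\<phi> t \<in> M \<times> N" if t: "t \<in> T" for t
  proof -
    have tv: "t j < d" if "j < k - 1" for j using t that by (auto simp: T_def)
    show ?thesis
      using k2 p tv unfolding \<phi>_def M_def N_def multi_idx_def u_def v_def by (auto simp: PiE_iff)
  qed
  have img: "\<phi> ` T = {x \<in> M \<times> N. case x of (m, n) \<Rightarrow> cnd k S p m n}"
  proof (intro equalityI subsetI)
    fix x assume "x \<in> \<phi> ` T"
    then obtain t where t: "t \<in> T" and x: "x = \<phi> t" by blast
    have "cnd k S p (fst (\<phi> t)) (snd (\<phi> t))"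
      unfolding cnd_def
    proof
      fix a assume a: "a \<in> {1..k}"
      show "(if a \<in> S then snd (\<phi> t) a else ((fst (\<phi> t))(k := p)) a) =
         (let b = if a = k then 1 else a + 1 in if b \<in> S then ((fst (\<phi> t))(k := p)) b else snd (\<phi> t) b)"
        using a k2 kS by (auto simp: \<phi>_def u_def v_def Let_def)
    qed
    then show "x \<in> {x \<in> M \<times> N. case x of (m, n) \<Rightarrow> cnd k S p m n}"
      using memT[OF t] x by (auto simp: case_prod_unfold)
  next
    fix x assume "x \<in> {x \<in> M \<times> N. case x of (m, n) \<Rightarrow> cnd k S p m n}"
    then obtain m n where x: "x = (m,n)" and m: "m \<in> M" and n: "n \<in> N" and c: "cnd k S p m n"
      by auto
    have c0: "\<And>a. a \<in> {1..k} \<Longrightarrow> (if a \<in> S then n a else (m(k := p)) a) =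
         (let b = if a = k then 1 else a + 1 in if b \<in> S then (m(k := p)) b else n b)"
      using c unfolding cnd_def by blast
    have c1: "(if b \<in> S then n b else m b) = (if Suc b \<in> S then m (Suc b) else n (Suc b))"
      if "1 \<le> b" "Suc b \<le> k - 1" for b
    proof -
      have h: "b \<in> {1..k}" "b \<noteq> k" "Suc b \<noteq> k" using that k2 by auto
      have h2: "(m(k:=p)) b = m b" "(m(k:=p)) (Suc b) = m (Suc b)" using h(2,3) by auto
      have "(if b \<in> S then n b else (m(k:=p)) b) = (if Suc b \<in> S then (m(k:=p)) (Suc b) else n (Suc b))"
        using c0[OF h(1)] h(2) by (simp add: Let_def)
      then show ?thesis unfolding h2 .
    qed
    obtain b0 where kb: "k = Suc b0" "1 \<le> b0" using k2 by (cases k) auto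
    have c2: "(if b0 \<in> S then n b0 else m b0) = n k"
    proof -
      have h: "b0 \<in> {1..k}" "b0 \<noteq> k" using kb by auto
      have h2: "(m(k:=p)) b0 = m b0" using h(2) by auto
      have "(if b0 \<in> S then n b0 else (m(k:=p)) b0) = n k"
        using c0[OF h(1)] h(2) kS kb by (simp add: Let_def)
      then show ?thesis unfolding h2 .
    qed
    have c3: "p = (if 1 \<in> S then m 1 else n 1)"
      using c0[of k] k2 kS by (auto simp: Let_def)
    define t where "t = restrict (\<lambda>j. if Suc j \<in> S then n (Suc j) else m (Suc j)) {..<k-1}"
    have tT: "t \<in> T"
      using m n k2 unfolding t_def T_def M_def N_def multi_idx_def by (auto simp: PiE_iff)
    have ta: "t (b-1) = (if b \<in> S then n b else m b)" if "1 \<le> b" "b \<le> k-1" for b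
    proof -
      have "Suc (b-1) = b" "b - 1 < k - 1" using that by auto
      then show ?thesis unfolding t_def by simp
    qed
    have tb: "t (a-1) = (if a \<in> S then n a else m a)" if "1 \<le> a" "a \<le> k-1" for a
    proof -
      have "Suc (a-1) = a" "a - 1 < k - 1" using that by auto
      then show ?thesis unfolding t_def by simp
    qed
    have f1: "fst (\<phi> t) = m"
    proof (rule PiE_ext[of _ "{1..k}-{k}" "\<lambda>_. {..<d}"])
      show "fst (\<phi> t) \<in> PiE ({1..k}-{k}) (\<lambda>_. {..<d})"
        using mem_Times_iff[THEN iffD1, OF memT[OF tT], THEN conjunct1] unfolding M_def multi_idx_def .
      show "m \<in> PiE ({1..k}-{k}) (\<lambda>_. {..<d})" using m unfolding M_def multi_idx_def .
      fix a assume a: "a \<in> {1..k}-{k}"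
      show "fst (\<phi> t) a = m a"
      proof (cases "a \<in> S")
        case True
        show ?thesis
        proof (cases "a = 1")
          case True
          then show ?thesis using \<open>a \<in> S\<close> a c3 by (simp add: \<phi>_def u_def)
        next
          case False
          obtain b where "a = Suc b" using a by (cases a) auto
          then have b: "a = Suc b" "1 \<le> b" "Suc b \<le> k - 1" using a False by auto
          then show ?thesis using \<open>a \<in> S\<close> a ta[of b] c1[of b] by (simp add: \<phi>_def u_def)
        qed
      next
        case False
        have "a \<le> k - 1" using a by auto
        then show ?thesis using a False tb[of a] by (simp add: \<phi>_def v_def)
      qed
    qed
    have f2: "snd (\<phi> t) = n"
    proof (rule PiE_ext[of _ "{1..k}" "\<lambda>_. {..<d}"])
      show "snd (\<phi> t) \<in> PiE {1..k} (\<lambda>_. {..<d})"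
        using mem_Times_iff[THEN iffD1, OF memT[OF tT], THEN conjunct2] unfolding N_def multi_idx_def .
      show "n \<in> PiE {1..k} (\<lambda>_. {..<d})" using n unfolding N_def multi_idx_def .
      fix a assume a: "a \<in> {1..k}"
      show "snd (\<phi> t) a = n a"
      proof (cases "a = k")
        case True
        then show ?thesis using kb ta[of b0] c2 by (simp add: \<phi>_def)
      next
        case ak: False
        show ?thesis
        proof (cases "a \<in> S")
          case True
          have "a \<le> k - 1" using a ak by auto
          then show ?thesis using True a ak tb[of a] by (simp add: \<phi>_def v_def)
        next
          case False
          show ?thesis
          proof (cases "a = 1")
            case True
            then show ?thesis using \<open>a \<notin> S\<close> a c3 k2 by (simp add: \<phi>_def u_def)
          next
            case False
            obtain b where "a = Suc b" using a by (cases a) auto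
            then have b: "a = Suc b" "1 \<le> b" "Suc b \<le> k - 1" using a ak False by auto
            then show ?thesis using \<open>a \<notin> S\<close> a ak ta[of b] c1[of b] by (simp add: \<phi>_def u_def)
          qed
        qed
      qed
    qed
    show "x \<in> \<phi> ` T" using f1 f2 tT x by (metis image_eqI prod.collapse)
  qed
  have fin: "finite (M \<times> N)" unfolding M_def N_def multi_idx_def by (auto intro!: finite_PiE)
  have "(\<Sum>(m,n)\<in>M \<times> N. if cnd k S p m n then (\<Prod>a\<in>{1..k}. X a $$ (n a, (m(k:=q)) a)) else 0)
     = (\<Sum>x\<in>M \<times> N. if (case x of (m,n) \<Rightarrow> cnd k S p m n)
          then (case x of (m,n) \<Rightarrow> (\<Prod>a\<in>{1..k}. X a $$ (n a, (m(k:=q)) a))) else 0)"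
    by (intro sum.cong refl) (auto simp: case_prod_unfold)
  also have "\<dots> = (\<Sum>t\<in>T. case \<phi> t of (m,n) \<Rightarrow> (\<Prod>a\<in>{1..k}. X a $$ (n a, (m(k:=q)) a)))"
    by (rule collapse[OF fin inj img])
  also have "\<dots> = (\<Sum>t\<in>T. (\<Prod>a\<in>{1..k-1}. Ent S X a (u t a) (v t a)) * X k $$ (t (k-2), q))"
  proof (intro sum.cong refl)
    fix t
    show "(case \<phi> t of (m,n) \<Rightarrow> (\<Prod>a\<in>{1..k}. X a $$ (n a, (m(k:=q)) a))) =
      (\<Prod>a\<in>{1..k-1}. Ent S X a (u t a) (v t a)) * X k $$ (t (k-2), q)"
      unfolding \<phi>_def prod.case by (rule prod_phi[OF k2])
  qed
  also have "\<dots> = (\<Sum>t\<in>T. (\<Prod>j<k-1. Ent S X (j+1) (if j = 0 then p else t (j-1)) (t j)) * X k $$ (t (k-2), q))"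
  proof (intro sum.cong refl arg_cong2[where f="(*)"])
    fix t
    have "(\<Prod>a\<in>{1..k-1}. Ent S X a (u t a) (v t a)) = (\<Prod>j<k-1. Ent S X (Suc j) (u t (Suc j)) (v t (Suc j)))"
      using prod.atLeast1_atMost_eq[of "\<lambda>a. Ent S X a (u t a) (v t a)" "k-1"] by simp
    also have "\<dots> = (\<Prod>j<k-1. Ent S X (j+1) (if j = 0 then p else t (j-1)) (t j))"
      by (intro prod.cong refl) (auto simp: u_def v_def)
    finally show "(\<Prod>a\<in>{1..k-1}. Ent S X a (u t a) (v t a)) = (\<Prod>j<k-1. Ent S X (j+1) (if j = 0 then p else t (j-1)) (t j))" .
  qed
  finally show ?thesis unfolding M_def N_def T_def .
qed



lemma case_in:
  assumes k2: "k \<ge> 2" and S: "S \<subseteq> {1..k}" and kS: "k \<in> S" and p: "p < d"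
  shows "(\<Sum>(m,n)\<in>multi_idx d ({1..k}-{k}) \<times> multi_idx d {1..k}.
         if cnd k S p m n then (\<Prod>a\<in>{1..k}. X a $$ (n a, (m(k:=q)) a)) else 0)
   = (\<Sum>t\<in>PiE {..<k-1} (\<lambda>_. {..<d}).
       (\<Prod>j<k-1. Ent S X (k-1-j) (t j) (if j = 0 then p else t (j-1))) * X k $$ (t (k-2), q))"
proof -
  obtain b0 where kb: "k = Suc b0" "1 \<le> b0" using k2 by (cases k) auto
  define T where "T = PiE {..<k-1} (\<lambda>_. {..<d})"
  define M where "M = multi_idx d ({1..k}-{k})"
  define N where "N = multi_idx d {1..k}"
  define u where "u t a = t (k-1-a)" for t :: "nat \<Rightarrow> nat" and a
  define v where "v t a = (if a = k-1 then p else t (k-2-a))" for t :: "nat \<Rightarrow> nat" and a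
  define \<phi> where "\<phi> t = (restrict (\<lambda>a. if a \<in> S then u t a else v t a) ({1..k}-{k}),
      restrict (\<lambda>a. if a = k then t (k-2) else if a \<in> S then v t a else u t a) {1..k})" for t
  have inj: "inj_on \<phi> T"
  proof (rule inj_onI)
    fix t t' assume t: "t \<in> T" and t': "t' \<in> T" and e: "\<phi> t = \<phi> t'"
    show "t = t'"
    proof (rule PiE_ext[OF t[unfolded T_def] t'[unfolded T_def]])
      fix j assume j: "j \<in> {..<k-1}"
      define a where "a = k-1-j"
      have e1: "fst (\<phi> t) a = fst (\<phi> t') a" and e2: "snd (\<phi> t) a = snd (\<phi> t') a"
        using e by auto
      have j1: "a \<le> k" "a \<noteq> k" "1 \<le> a" "k-1-a = j" using j unfolding a_def by auto
      show "t j = t' j"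
      proof (cases "a \<in> S")
        case True
        then show ?thesis using e1 j1 by (simp add: \<phi>_def u_def)
      next
        case False
        then show ?thesis using e2 j1 by (simp add: \<phi>_def u_def)
      qed
    qed
  qed
  have memT: "\<phi> t \<in> M \<times> N" if t: "t \<in> T" for t
  proof -
    have tv: "t j < d" if "j < k - 1" for j using t that by (auto simp: T_def)
    show ?thesis
      using k2 p tv unfolding \<phi>_def M_def N_def multi_idx_def u_def v_def by (auto simp: PiE_iff)
  qed
  have img: "\<phi> ` T = {x \<in> M \<times> N. case x of (m, n) \<Rightarrow> cnd k S p m n}"
  proof (intro equalityI subsetI)
    fix x assume "x \<in> \<phi> ` T"
    then obtain t where t: "t \<in> T" and x: "x = \<phi> t" by blast
    have "cnd k S p (fst (\<phi> t)) (snd (\<phi> t))"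
      unfolding cnd_def
    proof
      fix a assume a: "a \<in> {1..k}"
      show "(if a \<in> S then snd (\<phi> t) a else ((fst (\<phi> t))(k := p)) a) =
         (let b = if a = k then 1 else a + 1 in if b \<in> S then ((fst (\<phi> t))(k := p)) b else snd (\<phi> t) b)"
      proof (cases "a = k")
        case True
        then show ?thesis using kb kS by (simp add: \<phi>_def u_def v_def Let_def)
      next
        case False
        show ?thesis
        proof (cases "a = b0")
          case True
          then show ?thesis using kb kS by (simp add: \<phi>_def u_def v_def Let_def)
        next
          case False
          then have h: "1 \<le> a" "Suc a \<le> b0" "a \<noteq> k" "Suc a \<noteq> k" "k - 2 - a = k - 1 - Suc a" "a \<noteq> k - 1" "Suc a \<le> k"
            using a \<open>a \<noteq> k\<close> kb by auto
          then show ?thesis by (simp add: \<phi>_def u_def v_def Let_def)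
        qed
      qed
    qed
    then show "x \<in> {x \<in> M \<times> N. case x of (m, n) \<Rightarrow> cnd k S p m n}"
      using memT[OF t] x by (auto simp: case_prod_unfold)
  next
    fix x assume "x \<in> {x \<in> M \<times> N. case x of (m, n) \<Rightarrow> cnd k S p m n}"
    then obtain m n where x: "x = (m,n)" and m: "m \<in> M" and n: "n \<in> N" and c: "cnd k S p m n"
      by auto
    have c0: "\<And>a. a \<in> {1..k} \<Longrightarrow> (if a \<in> S then n a else (m(k := p)) a) =
         (let b = if a = k then 1 else a + 1 in if b \<in> S then (m(k := p)) b else n b)"
      using c unfolding cnd_def by blast
    have c1: "(if b \<in> S then n b else m b) = (if Suc b \<in> S then m (Suc b) else n (Suc b))"
      if "1 \<le> b" "Suc b \<le> k - 1" for b
    proof -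
      have h: "b \<in> {1..k}" "b \<noteq> k" "Suc b \<noteq> k" using that k2 by auto
      have h2: "(m(k:=p)) b = m b" "(m(k:=p)) (Suc b) = m (Suc b)" using h(2,3) by auto
      have "(if b \<in> S then n b else (m(k:=p)) b) = (if Suc b \<in> S then (m(k:=p)) (Suc b) else n (Suc b))"
        using c0[OF h(1)] h(2) by (simp add: Let_def)
      then show ?thesis unfolding h2 .
    qed
    have c2: "(if b0 \<in> S then n b0 else m b0) = p"
    proof -
      have h: "b0 \<in> {1..k}" "b0 \<noteq> k" using kb by auto
      have h2: "(m(k:=p)) b0 = m b0" using h(2) by auto
      have "(if b0 \<in> S then n b0 else (m(k:=p)) b0) = p"
        using c0[OF h(1)] h(2) kS kb by (simp add: Let_def)
      then show ?thesis unfolding h2 .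
    qed
    have c3: "n k = (if 1 \<in> S then m 1 else n 1)"
      using c0[of k] k2 kS by (auto simp: Let_def)
    define t where "t = restrict (\<lambda>j. if k-1-j \<in> S then m (k-1-j) else n (k-1-j)) {..<k-1}"
    have tT: "t \<in> T"
      using m n k2 unfolding t_def T_def M_def N_def multi_idx_def by (auto simp: PiE_iff)
    have ta: "t (k-1-a) = (if a \<in> S then m a else n a)" if "1 \<le> a" "a \<le> k-1" for a
    proof -
      have "k-1-(k-1-a) = a" "k-1-a < k - 1" using that by auto
      then show ?thesis unfolding t_def by simp
    qed
    have f1: "fst (\<phi> t) = m"
    proof (rule PiE_ext[of _ "{1..k}-{k}" "\<lambda>_. {..<d}"])
      show "fst (\<phi> t) \<in> PiE ({1..k}-{k}) (\<lambda>_. {..<d})"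
        using mem_Times_iff[THEN iffD1, OF memT[OF tT], THEN conjunct1] unfolding M_def multi_idx_def .
      show "m \<in> PiE ({1..k}-{k}) (\<lambda>_. {..<d})" using m unfolding M_def multi_idx_def .
      fix a assume a: "a \<in> {1..k}-{k}"
      have a1: "1 \<le> a" "a \<le> k - 1" "a \<noteq> k" using a by auto
      show "fst (\<phi> t) a = m a"
      proof (cases "a \<in> S")
        case True
        then show ?thesis using a a1 ta[OF a1(1,2)] by (simp add: \<phi>_def u_def)
      next
        case aS: False
        show ?thesis
        proof (cases "a = b0")
          case True
          then show ?thesis using aS a a1 c2 kb by (simp add: \<phi>_def v_def)
        next
          case False
          then have h: "Suc a \<le> k - 1" "k - 2 - a = k - 1 - Suc a" "a \<noteq> k - 1" using a1 kb by auto
          then show ?thesis using aS a a1 ta[of "Suc a"] c1[OF a1(1) h(1)] by (simp add: \<phi>_def v_def)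
        qed
      qed
    qed
    have f2: "snd (\<phi> t) = n"
    proof (rule PiE_ext[of _ "{1..k}" "\<lambda>_. {..<d}"])
      show "snd (\<phi> t) \<in> PiE {1..k} (\<lambda>_. {..<d})"
        using mem_Times_iff[THEN iffD1, OF memT[OF tT], THEN conjunct2] unfolding N_def multi_idx_def .
      show "n \<in> PiE {1..k} (\<lambda>_. {..<d})" using n unfolding N_def multi_idx_def .
      fix a assume a: "a \<in> {1..k}"
      show "snd (\<phi> t) a = n a"
      proof (cases "a = k")
        case True
        have "k - 2 = k - 1 - 1" by simp
        then show ?thesis using True k2 ta[of 1] c3 by (simp add: \<phi>_def)
      next
        case ak: False
        have a1: "1 \<le> a" "a \<le> k - 1" using a ak by auto
        show ?thesis
        proof (cases "a \<in> S")
          case aS: True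
          show ?thesis
          proof (cases "a = b0")
            case True
            then show ?thesis using aS a ak c2 kb by (simp add: \<phi>_def v_def)
          next
            case False
            then have h: "Suc a \<le> k - 1" "k - 2 - a = k - 1 - Suc a" "a \<noteq> k - 1" using a1 kb by auto
            then show ?thesis using aS a ak ta[of "Suc a"] c1[OF a1(1) h(1)] by (simp add: \<phi>_def v_def)
          qed
        next
          case False
          then show ?thesis using a ak a1 ta[OF a1] by (simp add: \<phi>_def u_def)
        qed
      qed
    qed
    show "x \<in> \<phi> ` T" using f1 f2 tT x by (metis image_eqI prod.collapse)
  qed
  have fin: "finite (M \<times> N)" unfolding M_def N_def multi_idx_def by (auto intro!: finite_PiE)
  have "(\<Sum>(m,n)\<in>M \<times> N. if cnd k S p m n then (\<Prod>a\<in>{1..k}. X a $$ (n a, (m(k:=q)) a)) else 0)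
     = (\<Sum>x\<in>M \<times> N. if (case x of (m,n) \<Rightarrow> cnd k S p m n)
          then (case x of (m,n) \<Rightarrow> (\<Prod>a\<in>{1..k}. X a $$ (n a, (m(k:=q)) a))) else 0)"
    by (intro sum.cong refl) (auto simp: case_prod_unfold)
  also have "\<dots> = (\<Sum>t\<in>T. case \<phi> t of (m,n) \<Rightarrow> (\<Prod>a\<in>{1..k}. X a $$ (n a, (m(k:=q)) a)))"
    by (rule collapse[OF fin inj img])
  also have "\<dots> = (\<Sum>t\<in>T. (\<Prod>a\<in>{1..k-1}. Ent S X a (u t a) (v t a)) * X k $$ (t (k-2), q))"
  proof (intro sum.cong refl)
    fix t
    show "(case \<phi> t of (m,n) \<Rightarrow> (\<Prod>a\<in>{1..k}. X a $$ (n a, (m(k:=q)) a))) =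
      (\<Prod>a\<in>{1..k-1}. Ent S X a (u t a) (v t a)) * X k $$ (t (k-2), q)"
      unfolding \<phi>_def prod.case by (rule prod_phi[OF k2])
  qed
  also have "\<dots> = (\<Sum>t\<in>T. (\<Prod>j<k-1. Ent S X (k-1-j) (t j) (if j = 0 then p else t (j-1))) * X k $$ (t (k-2), q))"
  proof (intro sum.cong refl arg_cong2[where f="(*)"])
    fix t
    show "(\<Prod>a\<in>{1..k-1}. Ent S X a (u t a) (v t a)) = (\<Prod>j<k-1. Ent S X (k-1-j) (t j) (if j = 0 then p else t (j-1)))"
    proof (rule prod.reindex_bij_witness[where i="\<lambda>a. k-1-a" and j="\<lambda>j. k-1-j"])
      fix a assume a: "a \<in> {1..k-1}"
      then show "k-1-(k-1-a) = a" "k-1-a \<in> {..<k-1}" by auto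
      have "u t a = t (k-1-a)" by (simp add: u_def)
      moreover have "v t a = (if k-1-a = 0 then p else t (k-1-a-1))"
      proof -
        have "a \<noteq> k - 1 \<Longrightarrow> k - 2 - a = k-1-a-1" using a by auto
        then show ?thesis using a by (auto simp: v_def)
      qed
      moreover have "k-1-(k-1-a) = a" using a by auto
      ultimately show "Ent S X (k-1-(k-1-a)) (t (k-1-a)) (if k-1-a = 0 then p else t (k-1-a-1)) = Ent S X a (u t a) (v t a)"
        by simp
    next
      fix j assume j: "j \<in> {..<k-1}"
      then show "k-1-(k-1-j) = j" "k-1-j \<in> {1..k-1}" by auto
    qed
  qed
  finally show ?thesis unfolding M_def N_def T_def .
qed



theorem proposition4:
  fixes d k :: nat and X :: "nat \<Rightarrow> complex mat" and S :: "nat set"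
  assumes "k \<ge> 2"
    and "\<And>i. i \<in> {1..k} \<Longrightarrow> X i \<in> carrier_mat d d"
    and "S \<subseteq> {1..k}"
  shows "ptrace_keep_last d k
           (op_mult d k (partial_transpose S (perm_op k (down_cycle k))) (tensor_mats k X))
         = (let X' = (\<lambda>i. if i \<in> S then transpose_mat (X i) else X i);
                Y  = (\<lambda>i. if i \<in> S then X i else transpose_mat (X i))
            in if k \<notin> S then foldr (\<lambda>i acc. X' i * acc) [1..<k] (X k)
               else foldr (\<lambda>i acc. Y i * acc) (rev [1..<k]) (X k))"
proof -
  note k2 = assms(1) and Xc = assms(2) and S = assms(3)
  define X' where "X' = (\<lambda>i. if i \<in> S then transpose_mat (X i) else X i)"
  define Y where "Y = (\<lambda>i. if i \<in> S then X i else transpose_mat (X i))"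
  define R where "R = (if k \<notin> S then foldr (\<lambda>i acc. X' i * acc) [1..<k] (X k)
               else foldr (\<lambda>i acc. Y i * acc) (rev [1..<k]) (X k))"
  have Xk: "X k \<in> carrier_mat d d" using Xc k2 by auto
  have X'c: "\<forall>i\<in>set [1..<k]. X' i \<in> carrier_mat d d" using Xc unfolding X'_def by auto
  have Yc: "\<forall>i\<in>set (rev [1..<k]). Y i \<in> carrier_mat d d" using Xc unfolding Y_def by auto
  have X'e: "X' i $$ (r, s) = Ent S X i r s" if "i \<in> {1..k}" "r < d" "s < d" for i r s
    using Xc[OF that(1)] that unfolding X'_def Ent_def by auto
  have Ye: "Y i $$ (r, s) = Ent S X i s r" if "i \<in> {1..k}" "r < d" "s < d" for i r s
    using Xc[OF that(1)] that unfolding Y_def Ent_def by auto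
  have Rc: "R \<in> carrier_mat d d"
    unfolding R_def using foldr_carrier[OF X'c Xk] foldr_carrier[OF Yc Xk] by auto
  have "ptrace_keep_last d k
           (op_mult d k (partial_transpose S (perm_op k (down_cycle k))) (tensor_mats k X)) = R"
  proof (rule eq_matI)
    show "dim_row (ptrace_keep_last d k (op_mult d k (partial_transpose S (perm_op k (down_cycle k))) (tensor_mats k X))) = dim_row R"
      "dim_col (ptrace_keep_last d k (op_mult d k (partial_transpose S (perm_op k (down_cycle k))) (tensor_mats k X))) = dim_col R"
      using Rc unfolding ptrace_keep_last_def by auto
    fix p q assume "p < dim_row R" "q < dim_col R"
    then have p: "p < d" and q: "q < d" using Rc by auto
    have tv: "t j < d" if "t \<in> PiE {..<k-1} (\<lambda>_. {..<d})" "j < k - 1" for t j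
      using that by auto
    have L: "ptrace_keep_last d k (op_mult d k (partial_transpose S (perm_op k (down_cycle k))) (tensor_mats k X)) $$ (p,q)
      = (\<Sum>(m,n)\<in>multi_idx d ({1..k}-{k}) \<times> multi_idx d {1..k}.
         if cnd k S p m n then (\<Prod>a\<in>{1..k}. X a $$ (n a, (m(k:=q)) a)) else 0)"
      by (rule entry[OF k2 S p q])
    show "ptrace_keep_last d k (op_mult d k (partial_transpose S (perm_op k (down_cycle k))) (tensor_mats k X)) $$ (p,q) = R $$ (p,q)"
    proof (cases "k \<in> S")
      case False
      have "R $$ (p,q) = foldr (\<lambda>i acc. X' i * acc) [1..<k] (X k) $$ (p,q)"
        using False unfolding R_def by simp
      also have "\<dots> = (\<Sum>t\<in>PiE {..<length [1..<k]} (\<lambda>_. {..<d}).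
       (\<Prod>j<length [1..<k]. X' ([1..<k]!j) $$ (if j = 0 then p else t (j-1), t j)) *
       X k $$ (if [1..<k] = [] then p else t (length [1..<k] - 1), q))"
        by (rule chain[OF X'c Xk p q])
      also have "\<dots> = (\<Sum>t\<in>PiE {..<k-1} (\<lambda>_. {..<d}).
       (\<Prod>j<k-1. Ent S X (j+1) (if j = 0 then p else t (j-1)) (t j)) * X k $$ (t (k-2), q))"
      unfolding length_upt
      proof (intro sum.cong refl)
        fix t assume t: "t \<in> PiE {..<k-1} (\<lambda>_. {..<d})"
        have ne: "[1..<k] \<noteq> []" "k - 1 - 1 = k - 2" using k2 by auto
        have "(\<Prod>j<k-1. X' ([1..<k]!j) $$ (if j = 0 then p else t (j-1), t j)) =
              (\<Prod>j<k-1. Ent S X (j+1) (if j = 0 then p else t (j-1)) (t j))"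
        proof (intro prod.cong)
          fix j assume j: "j \<in> {..<k-1}"
          have tl: "t i < d" if "i < k - 1" for i using PiE_mem[OF t] that by simp
          have "(if j = 0 then p else t (j-1)) < d" using tl[of "j-1"] j p by simp
          moreover have "t j < d" using tl[of j] j by simp
          moreover have "[1..<k]!j = j+1" using j by simp
          moreover have "j + 1 \<in> {1..k}" using j by auto
          ultimately show "X' ([1..<k]!j) $$ (if j = 0 then p else t (j-1), t j) = Ent S X (j+1) (if j = 0 then p else t (j-1)) (t j)"
            using X'e by simp
        qed (rule refl)
        then show "(\<Prod>j<k-1. X' ([1..<k]!j) $$ (if j = 0 then p else t (j-1), t j)) *
          X k $$ (if [1..<k] = [] then p else t (k - 1 - 1), q) =
          (\<Prod>j<k-1. Ent S X (j+1) (if j = 0 then p else t (j-1)) (t j)) * X k $$ (t (k-2), q)"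
          using ne by simp
      qed
      also have "\<dots> = ptrace_keep_last d k (op_mult d k (partial_transpose S (perm_op k (down_cycle k))) (tensor_mats k X)) $$ (p,q)"
        unfolding L by (rule case_notin[OF k2 S False p, symmetric])
      finally show ?thesis by simp
    next
      case True
      have "R $$ (p,q) = foldr (\<lambda>i acc. Y i * acc) (rev [1..<k]) (X k) $$ (p,q)"
        using True unfolding R_def by simp
      also have "\<dots> = (\<Sum>t\<in>PiE {..<length (rev [1..<k])} (\<lambda>_. {..<d}).
       (\<Prod>j<length (rev [1..<k]). Y (rev [1..<k]!j) $$ (if j = 0 then p else t (j-1), t j)) *
       X k $$ (if rev [1..<k] = [] then p else t (length (rev [1..<k]) - 1), q))"
        by (rule chain[OF Yc Xk p q])
      also have "\<dots> = (\<Sum>t\<in>PiE {..<k-1} (\<lambda>_. {..<d}).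
       (\<Prod>j<k-1. Ent S X (k-1-j) (t j) (if j = 0 then p else t (j-1))) * X k $$ (t (k-2), q))"
      unfolding length_rev length_upt
      proof (intro sum.cong refl)
        fix t assume t: "t \<in> PiE {..<k-1} (\<lambda>_. {..<d})"
        have ne: "rev [1..<k] \<noteq> []" "k - 1 - 1 = k - 2" using k2 by auto
        have "(\<Prod>j<k-1. Y (rev [1..<k]!j) $$ (if j = 0 then p else t (j-1), t j)) =
              (\<Prod>j<k-1. Ent S X (k-1-j) (t j) (if j = 0 then p else t (j-1)))"
        proof (intro prod.cong)
          fix j assume j: "j \<in> {..<k-1}"
          have tl: "t i < d" if "i < k - 1" for i using PiE_mem[OF t] that by simp
          have "(if j = 0 then p else t (j-1)) < d" using tl[of "j-1"] j p by simp
          moreover have "t j < d" using tl[of j] j by simp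
          moreover have "rev [1..<k]!j = k-1-j" using j by (simp add: rev_nth)
          moreover have "k-1-j \<in> {1..k}" using j by auto
          ultimately show "Y (rev [1..<k]!j) $$ (if j = 0 then p else t (j-1), t j) = Ent S X (k-1-j) (t j) (if j = 0 then p else t (j-1))"
            using Ye by simp
        qed (rule refl)
        then show "(\<Prod>j<k-1. Y (rev [1..<k]!j) $$ (if j = 0 then p else t (j-1), t j)) *
          X k $$ (if rev [1..<k] = [] then p else t (k - 1 - 1), q) =
          (\<Prod>j<k-1. Ent S X (k-1-j) (t j) (if j = 0 then p else t (j-1))) * X k $$ (t (k-2), q)"
          using ne by simp
      qed
      also have "\<dots> = ptrace_keep_last d k (op_mult d k (partial_transpose S (perm_op k (down_cycle k))) (tensor_mats k X)) $$ (p,q)"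
        unfolding L by (rule case_in[OF k2 S True p, symmetric])
      finally show ?thesis by simp
    qed
  qed
  then show ?thesis unfolding R_def X'_def Y_def Let_def .
qed


end
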